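(* Let $A\in\mathbb{R}^{m\times n}$ have no zero row, with rows $a_1^T,\dots,a_m^T$, let $b\in\mathbb{R}^m$ with $Ax=b$ consistent, and let $x^\dagger$ be the minimum-norm least-squares solution. Let $0<\mu_i<2$ for $1\le i\le m$, ${\bf u}=(\mu_1,\dots,\mu_m)$, $\Lambda=\mathrm{diag}(\mu_1,\dots,\mu_m)$, $M=\mathrm{diag}(1/\|a_1\|_2^2,\dots,1/\|a_m\|_2^2)$, and let $C({\bf u})\in\mathbb{R}^{m\times m}$ be a unit upper triangular matrix with $A_{\mathcal S}({\bf u})=C({\bf u})A$, where $A_{\mathcal S}({\bf u})=(Q_1({\bf u}_1)a_1,\dots,Q_m({\bf u}_m)a_m)^T$, $Q_j({\bf u}_j)=P_m(\mu_m)\cdots P_{j+1}(\mu_{j+1})$ for $j<m$, $Q_m({\bf u}_m)=I$, $P_k(\mu_k)=I-\mu_ka_ka_k^T/\|a_k\|_2^2$. Let $y_0\in\mathbb{R}^n$ and $$y_k=y_{k-1}+A^T[C({\bf u})]^T\Lambda M(b-Ay_{k-1}),\qquad k=1,2,\dots.$$ Then $y_k\to x^\dagger+P_{N(A)}y_0$ as $k\to\infty$.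
   Context: $P_{N(A)}$ is the orthogonal projection onto the null space of $A$. Such a matrix $C({\bf u})$ always exists. *)

theory Defs
  imports Complex_Main "Jordan_Normal_Form.Matrix"
begin

text \<open>Matrices are Jordan_Normal_Form matrices; rows/entries are 0-indexed,
  so the paper's row a_i (1 \<le> i \<le> m) is row A (i-1).\<close>

definition sqnorm :: "real vec \<Rightarrow> real" where
  "sqnorm v = v \<bullet> v"

definition is_ls_sol :: "real mat \<Rightarrow> real vec \<Rightarrow> real vec \<Rightarrow> bool" where
  "is_ls_sol A b x \<longleftrightarrow> x \<in> carrier_vec (dim_col A) \<and>
     (\<forall>z \<in> carrier_vec (dim_col A). sqnorm (A *\<^sub>v x - b) \<le> sqnorm (A *\<^sub>v z - b))"

definition mnls :: "real mat \<Rightarrow> real vec \<Rightarrow> real vec" where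
  "mnls A b = (THE x. is_ls_sol A b x \<and> (\<forall>z. is_ls_sol A b z \<longrightarrow> sqnorm x \<le> sqnorm z))"

definition proj_null :: "real mat \<Rightarrow> real vec \<Rightarrow> real vec" where
  "proj_null A y = (THE p. p \<in> carrier_vec (dim_col A) \<and> A *\<^sub>v p = 0\<^sub>v (dim_row A) \<and>
     (\<forall>z \<in> carrier_vec (dim_col A). A *\<^sub>v z = 0\<^sub>v (dim_row A) \<longrightarrow> (y - p) \<bullet> z = 0))"

definition Pk :: "real mat \<Rightarrow> (nat \<Rightarrow> real) \<Rightarrow> nat \<Rightarrow> real mat" where
  "Pk A mu k = 1\<^sub>m (dim_col A) -
     (mu k / sqnorm (row A k)) \<cdot>\<^sub>m
       mat (dim_col A) (dim_col A) (\<lambda>(i,j). row A k $ i * row A k $ j)"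

text \<open>Q_j(u_j) = P_m(mu_m) ... P_{j+1}(mu_{j+1}) (0-indexed: P_{m-1} ... P_{j+1}),
  and Q for the last row is the identity\<close>
definition Qj :: "real mat \<Rightarrow> (nat \<Rightarrow> real) \<Rightarrow> nat \<Rightarrow> real mat" where
  "Qj A mu j = foldl (\<lambda>acc k. Pk A mu k * acc) (1\<^sub>m (dim_col A)) [Suc j..<dim_row A]"

definition AS :: "real mat \<Rightarrow> (nat \<Rightarrow> real) \<Rightarrow> real mat" where
  "AS A mu = mat (dim_row A) (dim_col A) (\<lambda>(i,j). (Qj A mu i *\<^sub>v row A i) $ j)"

definition unit_upper_triangular :: "nat \<Rightarrow> real mat \<Rightarrow> bool" where
  "unit_upper_triangular m C \<longleftrightarrow> C \<in> carrier_mat m m \<and>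
     (\<forall>i<m. C $$ (i,i) = 1) \<and> (\<forall>i<m. \<forall>j<i. C $$ (i,j) = 0)"

end

theory Submission
  imports Defs
begin

lemma sp_sum0: "v \<bullet> w = (\<Sum>i<dim_vec w. v $ i * w $ i)"
  unfolding scalar_prod_def by (simp add: atLeast0LessThan)

lemma bw_vec:
  fixes x :: "nat \<Rightarrow> real vec"
  assumes bd: "\<forall>t i. i < n \<longrightarrow> \<bar>x t $ i\<bar> \<le> B"
  shows "\<exists>r L. strict_mono r \<and> L \<in> carrier_vec n \<and> (\<forall>i<n. (\<lambda>t. x (r t) $ i) \<longlonglongrightarrow> L $ i)"
proof -
  have "k \<le> n \<Longrightarrow> \<exists>r f. strict_mono r \<and> (\<forall>i<k. (\<lambda>t. x (r t) $ i) \<longlonglongrightarrow> f i)" for k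
  proof (induction k)
    case 0
    have "strict_mono (\<lambda>t::nat. t)" by (simp add: strict_mono_def)
    then show ?case by (intro exI[of _ "\<lambda>t. t"]) auto
  next
    case (Suc k)
    then obtain r f where r: "strict_mono r" and f: "\<forall>i<k. (\<lambda>t. x (r t) $ i) \<longlonglongrightarrow> f i" by auto
    let ?s = "\<lambda>t. x (r t) $ k"
    from seq_monosub[of ?s] obtain g where g: "strict_mono g" and gm: "monoseq (\<lambda>t. ?s (g t))"
      by auto
    have "Bseq (\<lambda>t. ?s (g t))" using bd Suc.prems by (intro BseqI'[where K = B]) auto
    then have "convergent (\<lambda>t. ?s (g t))" using gm by (rule Bseq_monoseq_convergent)
    then obtain l where l: "(\<lambda>t. ?s (g t)) \<longlonglongrightarrow> l" unfolding convergent_def by blast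
    have sm: "strict_mono (\<lambda>t. r (g t))" using r g by (rule strict_mono_compose)
    have "\<forall>i<Suc k. (\<lambda>t. x (r (g t)) $ i) \<longlonglongrightarrow> (f(k := l)) i"
    proof (intro allI impI)
      fix i assume i: "i < Suc k"
      show "(\<lambda>t. x (r (g t)) $ i) \<longlonglongrightarrow> (f(k := l)) i"
      proof (cases "i = k")
        case True then show ?thesis using l by simp
      next
        case False
        then have "i < k" using i by auto
        then have "((\<lambda>t. x (r t) $ i) \<circ> g) \<longlonglongrightarrow> f i" using f g by (intro LIMSEQ_subseq_LIMSEQ) auto
        then show ?thesis using False by (simp add: o_def)
      qed
    qed
    then show ?case using sm by (intro exI[of _ "\<lambda>t. r (g t)"] exI[of _ "f(k := l)"]) auto
  qed
  then obtain r f where "strict_mono r" "\<forall>i<n. (\<lambda>t. x (r t) $ i) \<longlonglongrightarrow> f i" by blast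
  then show ?thesis by (intro exI[of _ r] exI[of _ "vec n f"]) auto
qed

lemma mat_vec_tendsto:
  fixes M :: "real mat"
  assumes M: "M \<in> carrier_mat k n" and x: "\<forall>t. x t \<in> carrier_vec n" and L: "L \<in> carrier_vec n"
    and lim: "\<forall>i<n. (\<lambda>t. x t $ i) \<longlonglongrightarrow> L $ i" and i: "i < k"
  shows "(\<lambda>t. (M *\<^sub>v x t) $ i) \<longlonglongrightarrow> (M *\<^sub>v L) $ i"
proof -
  have e: "(M *\<^sub>v v) $ i = (\<Sum>j<n. row M i $ j * v $ j)" if "v \<in> carrier_vec n" for v
    using M i that by (simp add: sp_sum0)
  have f: "(\<lambda>t. (M *\<^sub>v x t) $ i) = (\<lambda>t. \<Sum>j<n. row M i $ j * x t $ j)"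
    using e x by auto
  show ?thesis unfolding e[OF L] f
    by (intro tendsto_sum tendsto_mult_left) (use lim in auto)
qed

lemma sp_tendsto:
  fixes z :: "real vec"
  assumes z: "z \<in> carrier_vec n" and lim: "\<forall>i<n. (\<lambda>t. x t $ i) \<longlonglongrightarrow> L $ i"
  shows "(\<lambda>t. x t \<bullet> z) \<longlonglongrightarrow> L \<bullet> z"
  unfolding sp_sum0 using z by (simp, intro tendsto_sum tendsto_mult_right) (use lim in auto)

lemma sqnorm_tendsto:
  assumes x: "\<forall>t. x t \<in> carrier_vec n" and L: "L \<in> carrier_vec n"
   and lim: "\<forall>i<n. (\<lambda>t. x t $ i) \<longlonglongrightarrow> L $ i"
  shows "(\<lambda>t. sqnorm (x t)) \<longlonglongrightarrow> sqnorm L"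
proof -
  have e: "sqnorm v = (\<Sum>j<n. v $ j * v $ j)" if "v \<in> carrier_vec n" for v :: "real vec"
    using that unfolding sqnorm_def by (simp add: sp_sum0)
  have f: "(\<lambda>t. sqnorm (x t)) = (\<lambda>t. \<Sum>j<n. x t $ j * x t $ j)"
    using e x by auto
  show ?thesis unfolding e[OF L] f
    by (intro tendsto_sum tendsto_mult) (use lim in auto)
qed

lemma sqnorm_nonneg: "sqnorm (v :: real vec) \<ge> 0"
  unfolding sqnorm_def sp_sum0 by (intro sum_nonneg) auto

lemma comp_le: assumes "i < dim_vec (v :: real vec)" shows "(v $ i)^2 \<le> sqnorm v"
proof -
  have "(v $ i)^2 = (\<Sum>j\<in>{i}. v $ j * v $ j)" by (simp add: power2_eq_square)
  also have "\<dots> \<le> (\<Sum>j<dim_vec v. v $ j * v $ j)" using assms by (intro sum_mono2) auto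
  finally show ?thesis unfolding sqnorm_def sp_sum0 .
qed

lemma comp_bound: assumes "i < dim_vec (v :: real vec)" shows "\<bar>v $ i\<bar> \<le> 1 + sqnorm v"
proof -
  have h: "(v $ i)^2 \<le> sqnorm v" by (rule comp_le[OF assms])
  show ?thesis
  proof (cases "\<bar>v $ i\<bar> \<le> 1")
    case True then show ?thesis using sqnorm_nonneg[of v] by simp
  next
    case False
    then have "\<bar>v $ i\<bar> * 1 \<le> \<bar>v $ i\<bar> * \<bar>v $ i\<bar>" by (intro mult_left_mono) auto
    then have "\<bar>v $ i\<bar> \<le> \<bar>v $ i\<bar> * \<bar>v $ i\<bar>" by simp
    also have "\<dots> = (v $ i)^2" by (simp add: power2_eq_square abs_mult_self_eq)
    finally have "\<bar>v $ i\<bar> \<le> sqnorm v" using h by (rule order_trans)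
    then show ?thesis by simp
  qed
qed




locale kacz =
  fixes A :: "real mat" and m n :: nat and mu :: "nat \<Rightarrow> real"
  assumes A: "A \<in> carrier_mat m n"
    and nozero: "\<forall>i<m. row A i \<noteq> 0\<^sub>v n"
    and mu: "\<forall>i<m. 0 < mu i \<and> mu i < 2"
begin

lemma dims[simp]: "dim_row A = m" "dim_col A = n" using A by auto

lemma sp_sum: "v \<bullet> w = (\<Sum>i<dim_vec w. v $ i * w $ i)"
  unfolding scalar_prod_def by (simp add: atLeast0LessThan)

lemma sq_pos: assumes "k < m" shows "sqnorm (row A k) > 0"
proof -
  let ?a = "row A k"
  have ge: "sqnorm ?a = (\<Sum>i<n. ?a $ i * ?a $ i)" unfolding sqnorm_def sp_sum by simp
  have "sqnorm ?a \<noteq> 0"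
  proof
    assume "sqnorm ?a = 0"
    then have "\<forall>i\<in>{..<n}. ?a $ i * ?a $ i = 0" using ge
      by (subst sum_nonneg_eq_0_iff[symmetric]) auto
    then have "?a = 0\<^sub>v n" by (intro eq_vecI) auto
    with nozero assms show False by auto
  qed
  moreover have "sqnorm ?a \<ge> 0" unfolding ge by (intro sum_nonneg) auto
  ultimately show ?thesis by linarith
qed

definition "P k = Pk A mu k"
definition "c k = mu k / sqnorm (row A k)"

lemma P_carrier[simp]: "P k \<in> carrier_mat n n"
  unfolding P_def Pk_def by auto

lemma P_dims[simp]: "dim_row (P k) = n" "dim_col (P k) = n"
  using carrier_matD[OF P_carrier[of k]] by auto

lemma P_mult: assumes v: "v \<in> carrier_vec n"
  shows "P k *\<^sub>v v = v - (c k * (row A k \<bullet> v)) \<cdot>\<^sub>v row A k"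
proof (rule eq_vecI)
  fix i assume i: "i < dim_vec (v - (c k * (row A k \<bullet> v)) \<cdot>\<^sub>v row A k)"
  then have i: "i < n" using v by auto
  have "row (P k) i \<bullet> v = v $ i - c k * (row A k \<bullet> v) * row A k $ i"
    using i v unfolding P_def Pk_def c_def sp_sum
    by (simp add: sum_subtractf sum_distrib_left algebra_simps if_distrib[of "\<lambda>x. _ * x"] cong: if_cong)
  then show "(P k *\<^sub>v v) $ i = (v - (c k * (row A k \<bullet> v)) \<cdot>\<^sub>v row A k) $ i"
    using i v by simp
qed (use v in auto)

lemma sqnorm_sub: assumes v: "v \<in> carrier_vec n" and a: "a \<in> carrier_vec n"
  shows "sqnorm (v - s \<cdot>\<^sub>v a) = sqnorm v - 2 * s * (a \<bullet> v) + s^2 * sqnorm a"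
proof -
  have "(\<Sum>i<n. (v $ i - s * a $ i) * (v $ i - s * a $ i))
      = (\<Sum>i<n. v $ i * v $ i) - 2 * s * (\<Sum>i<n. a $ i * v $ i) + s^2 * (\<Sum>i<n. a $ i * a $ i)"
    by (simp add: algebra_simps sum.distrib sum_subtractf sum_distrib_left power2_eq_square)
  then show ?thesis using v a unfolding sqnorm_def sp_sum by simp
qed

lemma P_norm: assumes v: "v \<in> carrier_vec n" and k: "k < m"
  shows "sqnorm (P k *\<^sub>v v) = sqnorm v - mu k * (2 - mu k) * (row A k \<bullet> v)^2 / sqnorm (row A k)"
proof -
  have q: "sqnorm (row A k) > 0" using sq_pos k by auto
  have r: "row A k \<in> carrier_vec n" using k A by auto
  show ?thesis unfolding P_mult[OF v] sqnorm_sub[OF v r] c_def using q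
    by (simp add: field_simps power2_eq_square)
qed

definition "N z \<longleftrightarrow> z \<in> carrier_vec n \<and> A *\<^sub>v z = 0\<^sub>v m"
definition "orth w \<longleftrightarrow> w \<in> carrier_vec n \<and> (\<forall>z. N z \<longrightarrow> w \<bullet> z = 0)"

lemma N_row: assumes "N z" "k < m" shows "row A k \<bullet> z = 0"
proof -
  have "(A *\<^sub>v z) $ k = 0" using assms unfolding N_def by simp
  then show ?thesis using assms by simp
qed

lemma P_N: assumes "N z" "k < m" shows "P k *\<^sub>v z = z"
proof -
  have z: "z \<in> carrier_vec n" using assms unfolding N_def by auto
  show ?thesis unfolding P_mult[OF z] N_row[OF assms] using z A assms by (intro eq_vecI) auto
qed

lemma orth_row: assumes k: "k < m" shows "orth (s \<cdot>\<^sub>v row A k)"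
  unfolding orth_def using k A N_row[OF _ k] by (auto simp: N_def)

lemma orth_add: "orth u \<Longrightarrow> orth w \<Longrightarrow> orth (u + w)"
  unfolding orth_def N_def by (auto simp: add_scalar_prod_distrib[of _ n])

lemma orth_minus: "orth u \<Longrightarrow> orth w \<Longrightarrow> orth (u - w)"
  unfolding orth_def N_def by (auto simp: minus_scalar_prod_distrib[of _ n])

lemma P_orth: assumes "orth w" "k < m" shows "orth (P k *\<^sub>v w)"
proof -
  have w: "w \<in> carrier_vec n" using assms unfolding orth_def by auto
  show ?thesis unfolding P_mult[OF w] by (intro orth_minus assms orth_row)
qed

lemma P_diff_orth: assumes v: "v \<in> carrier_vec n" and k: "k < m" shows "orth (v - P k *\<^sub>v v)"
proof -
  have "v - P k *\<^sub>v v = (c k * (row A k \<bullet> v)) \<cdot>\<^sub>v row A k"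
    unfolding P_mult[OF v] using v k A by (intro eq_vecI) auto
  then show ?thesis using orth_row[OF k] by simp
qed

definition "G j = foldl (\<lambda>acc k. P k * acc) (1\<^sub>m n) [j..<m]"

lemma foldl_P: "X \<in> carrier_mat n n \<Longrightarrow>
   foldl (\<lambda>acc k. P k * acc) X xs = foldl (\<lambda>acc k. P k * acc) (1\<^sub>m n) xs * X
   \<and> foldl (\<lambda>acc k. P k * acc) (1\<^sub>m n) xs \<in> carrier_mat n n"
proof (induction xs arbitrary: X)
  case Nil then show ?case by simp
next
  case (Cons k xs)
  have c1: "P k * X \<in> carrier_mat n n" using Cons.prems by auto
  note IH1 = Cons.IH[OF c1]
  note IH2 = Cons.IH[OF P_carrier[of k]]
  let ?F = "foldl (\<lambda>acc k. P k * acc) (1\<^sub>m n) xs"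
  have F: "?F \<in> carrier_mat n n" using IH2 by auto
  have "?F * (P k * X) = ?F * P k * X"
    using F Cons.prems by (simp add: assoc_mult_mat[of _ n n _ n _ n])
  then show ?case using IH1 IH2 Cons.prems F
    by simp
qed

lemma G_carrier[simp]: "G j \<in> carrier_mat n n"
  unfolding G_def using foldl_P[of "1\<^sub>m n"] by auto

lemma G_dims[simp]: "dim_row (G j) = n" "dim_col (G j) = n"
  using carrier_matD[OF G_carrier[of j]] by auto

lemma G_ge: "m \<le> j \<Longrightarrow> G j = 1\<^sub>m n"
  unfolding G_def by simp

lemma G_step: assumes "j < m" shows "G j = G (Suc j) * P j"
proof -
  have "[j..<m] = j # [Suc j..<m]" using assms by (simp add: upt_conv_Cons)
  then show ?thesis unfolding G_def using foldl_P[of "P j * 1\<^sub>m n" "[Suc j..<m]"] by simp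
qed

lemma G_mult: assumes "j < m" "v \<in> carrier_vec n" shows "G j *\<^sub>v v = G (Suc j) *\<^sub>v (P j *\<^sub>v v)"
  unfolding G_step[OF assms(1)] using assms by (simp add: assoc_mult_mat_vec[of _ n n _ n])

lemma G_vec[simp]: "v \<in> carrier_vec n \<Longrightarrow> G j *\<^sub>v v \<in> carrier_vec n"
  by (rule mult_mat_vec_carrier[OF G_carrier])

lemma P_vec[simp]: "v \<in> carrier_vec n \<Longrightarrow> P j *\<^sub>v v \<in> carrier_vec n"
  by (rule mult_mat_vec_carrier[OF P_carrier])

lemma G_N: "N z \<Longrightarrow> G j *\<^sub>v z = z"
proof (induction j rule: measure_induct_rule[of "\<lambda>j. m - j"])
  case (less j)
  show ?case
  proof (cases "j < m")
    case True
    have z: "z \<in> carrier_vec n" using less.prems unfolding N_def by auto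
    have "G j *\<^sub>v z = G (Suc j) *\<^sub>v z" using G_mult[OF True z] P_N[OF less.prems True] by simp
    also have "\<dots> = z" using less.IH[of "Suc j"] True less.prems by simp
    finally show ?thesis .
  next
    case False
    then show ?thesis using G_ge[of j] less.prems unfolding N_def by auto
  qed
qed

lemma G_norm: "v \<in> carrier_vec n \<Longrightarrow> sqnorm (G j *\<^sub>v v) \<le> sqnorm v \<and>
   (sqnorm (G j *\<^sub>v v) = sqnorm v \<longrightarrow> (\<forall>k. j \<le> k \<and> k < m \<longrightarrow> row A k \<bullet> v = 0))"
proof (induction j arbitrary: v rule: measure_induct_rule[of "\<lambda>j. m - j"])
  case (less j)
  show ?case
  proof (cases "j < m")
    case True
    note v = less.prems
    let ?u = "P j *\<^sub>v v"
    have u: "?u \<in> carrier_vec n" using v by simp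
    have IH: "sqnorm (G (Suc j) *\<^sub>v ?u) \<le> sqnorm ?u \<and>
      (sqnorm (G (Suc j) *\<^sub>v ?u) = sqnorm ?u \<longrightarrow> (\<forall>k. Suc j \<le> k \<and> k < m \<longrightarrow> row A k \<bullet> ?u = 0))"
      using less.IH[of "Suc j" ?u] True u by simp
    have q: "sqnorm (row A j) > 0" using sq_pos True by auto
    have mj: "mu j * (2 - mu j) > 0" using mu True by auto
    have mj2: "mu j \<noteq> 0" "mu j \<noteq> 2" using mu True by auto
    have nn: "mu j * (2 - mu j) * (row A j \<bullet> v)^2 / sqnorm (row A j) \<ge> 0"
    proof -
      have "mu j * (2 - mu j) * (row A j \<bullet> v)^2 \<ge> 0" using mj by simp
      then show ?thesis using q by simp
    qed
    have Pn: "sqnorm ?u = sqnorm v - mu j * (2 - mu j) * (row A j \<bullet> v)^2 / sqnorm (row A j)"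
      using P_norm[OF v True] .
    have Gj: "G j *\<^sub>v v = G (Suc j) *\<^sub>v ?u" using G_mult[OF True v] .
    show ?thesis
    proof
      show "sqnorm (G j *\<^sub>v v) \<le> sqnorm v" unfolding Gj using conjunct1[OF IH] Pn nn by linarith
      show "sqnorm (G j *\<^sub>v v) = sqnorm v \<longrightarrow> (\<forall>k. j \<le> k \<and> k < m \<longrightarrow> row A k \<bullet> v = 0)"
      proof
        assume eq: "sqnorm (G j *\<^sub>v v) = sqnorm v"
        then have "mu j * (2 - mu j) * (row A j \<bullet> v)^2 / sqnorm (row A j) = 0"
          using conjunct1[OF IH] Pn nn eq unfolding Gj by linarith
        then have z: "row A j \<bullet> v = 0" using q mj mj2 by auto
        then have uv: "?u = v" unfolding P_mult[OF v] using v A True by (intro eq_vecI) auto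
        then have "sqnorm ?u = sqnorm v" by simp
        then have "\<forall>k. Suc j \<le> k \<and> k < m \<longrightarrow> row A k \<bullet> v = 0" using IH eq Gj uv by simp
        then show "\<forall>k. j \<le> k \<and> k < m \<longrightarrow> row A k \<bullet> v = 0" using z
          by (metis Suc_leI le_neq_implies_less)
      qed
    qed
  next
    case False
    then show ?thesis using G_ge[of j] less.prems by auto
  qed
qed

lemma G_orth: "orth w \<Longrightarrow> orth (G j *\<^sub>v w)"
proof (induction j arbitrary: w rule: measure_induct_rule[of "\<lambda>j. m - j"])
  case (less j)
  show ?case
  proof (cases "j < m")
    case True
    have w: "w \<in> carrier_vec n" using less.prems unfolding orth_def by auto
    show ?thesis unfolding G_mult[OF True w] using less.IH[of "Suc j"] True P_orth[OF less.prems True]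
      by simp
  next
    case False
    then show ?thesis using G_ge[of j] less.prems unfolding orth_def by auto
  qed
qed

lemma G_diff_orth: "v \<in> carrier_vec n \<Longrightarrow> orth (v - G j *\<^sub>v v)"
proof (induction j arbitrary: v rule: measure_induct_rule[of "\<lambda>j. m - j"])
  case (less j)
  note v = less.prems
  show ?case
  proof (cases "j < m")
    case True
    let ?u = "P j *\<^sub>v v"
    have e: "v - G j *\<^sub>v v = (v - ?u) + (?u - G (Suc j) *\<^sub>v ?u)"
      unfolding G_mult[OF True v] using v by (intro eq_vecI) auto
    show ?thesis unfolding e using less.IH[of "Suc j" ?u] True v P_diff_orth[OF v True]
      by (intro orth_add) auto
  next
    case False
    have "v - G j *\<^sub>v v = 0\<^sub>v n" using G_ge[of j] False v by (intro eq_vecI) auto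
    then show ?thesis unfolding orth_def N_def by simp
  qed
qed

lemma G_tele: "v \<in> carrier_vec n \<Longrightarrow> i < n \<Longrightarrow> (G j *\<^sub>v v) $ i =
   v $ i - (\<Sum>k\<in>{j..<m}. c k * (row A k \<bullet> v) * (G (Suc k) *\<^sub>v row A k) $ i)"
proof (induction j arbitrary: v rule: measure_induct_rule[of "\<lambda>j. m - j"])
  case (less j)
  note v = less.prems(1) and i = less.prems(2)
  show ?case
  proof (cases "j < m")
    case True
    have r: "row A j \<in> carrier_vec n" using True A by auto
    have "(G j *\<^sub>v v) $ i = (G (Suc j) *\<^sub>v v) $ i - c j * (row A j \<bullet> v) * (G (Suc j) *\<^sub>v row A j) $ i"
      unfolding G_mult[OF True v] P_mult[OF v] using v r i
      by (simp add: scalar_prod_minus_distrib[of _ n])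
    also have "\<dots> = v $ i - (\<Sum>k\<in>{j..<m}. c k * (row A k \<bullet> v) * (G (Suc k) *\<^sub>v row A k) $ i)"
      using less.IH[of "Suc j" v] True v i by (simp add: sum.atLeast_Suc_lessThan)
    finally show ?thesis .
  next
    case False
    then show ?thesis using G_ge[of j] v i by auto
  qed
qed

end


context kacz begin

lemma G0_eq_N: assumes v: "v \<in> carrier_vec n" and eq: "sqnorm (G 0 *\<^sub>v v) = sqnorm v" shows "N v"
proof -
  have "\<forall>k. 0 \<le> k \<and> k < m \<longrightarrow> row A k \<bullet> v = 0" using G_norm[OF v, of 0] eq by auto
  then have "A *\<^sub>v v = 0\<^sub>v m" using A by (intro eq_vecI) auto
  then show ?thesis unfolding N_def using v by auto
qed

lemma core:
  assumes x0: "x 0 \<in> carrier_vec n" and xs: "\<forall>t. x (Suc t) = G 0 *\<^sub>v x t"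
  shows "\<exists>L r. strict_mono r \<and> N L \<and> (\<forall>i<n. (\<lambda>t. x (r t) $ i) \<longlonglongrightarrow> L $ i)
     \<and> (\<lambda>t. sqnorm (x t)) \<longlonglongrightarrow> sqnorm L"
proof -
  have xc: "x t \<in> carrier_vec n" for t by (induction t) (use x0 xs in auto)
  have step: "sqnorm (x (Suc t)) \<le> sqnorm (x t)" for t using xs G_norm[OF xc[of t], of 0] by simp
  have dec: "decseq (\<lambda>t. sqnorm (x t))" by (rule decseq_SucI) (rule step)
  have "\<forall>i. 0 \<le> sqnorm (x i)" using sqnorm_nonneg by auto
  then obtain l where l: "(\<lambda>t. sqnorm (x t)) \<longlonglongrightarrow> l" and "\<forall>i. l \<le> sqnorm (x i)"
    by (rule decseq_convergent[OF dec])
  have mono: "sqnorm (x t) \<le> sqnorm (x 0)" for t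
    by (induction t) (use step order_trans in auto)
  have bd: "\<forall>t i. i < n \<longrightarrow> \<bar>x t $ i\<bar> \<le> 1 + sqnorm (x 0)"
  proof (intro allI impI)
    fix t i assume i: "i < n"
    have "\<bar>x t $ i\<bar> \<le> 1 + sqnorm (x t)" using comp_bound[of i "x t"] i xc[of t] by auto
    then show "\<bar>x t $ i\<bar> \<le> 1 + sqnorm (x 0)" using mono[of t] by linarith
  qed
  obtain r L where r: "strict_mono r" and L: "L \<in> carrier_vec n"
    and lim: "\<forall>i<n. (\<lambda>t. x (r t) $ i) \<longlonglongrightarrow> L $ i"
    using bw_vec[OF bd] by blast
  have s1: "(\<lambda>t. sqnorm (x (r t))) \<longlonglongrightarrow> sqnorm L"
    using sqnorm_tendsto[of "\<lambda>t. x (r t)" n L] xc L lim by auto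
  have s2: "(\<lambda>t. sqnorm (x (r t))) \<longlonglongrightarrow> l"
    using LIMSEQ_subseq_LIMSEQ[OF l r] by (simp add: o_def)
  have lL: "l = sqnorm L" using LIMSEQ_unique[OF s2 s1] .
  have c: "\<forall>i<n. (\<lambda>t. x (Suc (r t)) $ i) \<longlonglongrightarrow> (G 0 *\<^sub>v L) $ i"
  proof (intro allI impI)
    fix i assume i: "i < n"
    show "(\<lambda>t. x (Suc (r t)) $ i) \<longlonglongrightarrow> (G 0 *\<^sub>v L) $ i"
      using mat_vec_tendsto[OF G_carrier[of 0], of "\<lambda>t. x (r t)" L i] xc L lim i xs by simp
  qed
  have s3: "(\<lambda>t. sqnorm (x (Suc (r t)))) \<longlonglongrightarrow> sqnorm (G 0 *\<^sub>v L)"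
    using sqnorm_tendsto[of "\<lambda>t. x (Suc (r t))" n "G 0 *\<^sub>v L"] xc L c by auto
  have s4: "(\<lambda>t. sqnorm (x (Suc (r t)))) \<longlonglongrightarrow> l"
    using LIMSEQ_subseq_LIMSEQ[OF LIMSEQ_Suc[OF l] r] by (simp add: o_def)
  have "sqnorm (G 0 *\<^sub>v L) = sqnorm L" using LIMSEQ_unique[OF s3 s4] lL by simp
  then have "N L" using G0_eq_N L by auto
  then show ?thesis using r lim l lL by (intro exI[of _ L] exI[of _ r]) simp
qed

lemma orth_lim:
  assumes o: "\<forall>t. orth (u t)" and M: "M \<in> carrier_vec n"
    and lim: "\<forall>i<n. (\<lambda>t. u (r t) $ i) \<longlonglongrightarrow> M $ i"
  shows "orth M"
  unfolding orth_def
proof (intro conjI allI impI)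
  fix z assume z: "N z"
  then have zc: "z \<in> carrier_vec n" unfolding N_def by auto
  have "(\<lambda>t. u (r t) \<bullet> z) \<longlonglongrightarrow> M \<bullet> z" using sp_tendsto[OF zc lim] .
  moreover have "(\<lambda>t. u (r t) \<bullet> z) = (\<lambda>t. 0)" using o z unfolding orth_def by auto
  ultimately have "(\<lambda>t. 0::real) \<longlonglongrightarrow> M \<bullet> z" by simp
  then have "0 = M \<bullet> z" by (rule LIMSEQ_unique[OF tendsto_const])
  then show "M \<bullet> z = 0" by simp
qed (rule M)

lemma sqnorm_zero: assumes "sqnorm w = 0" "w \<in> carrier_vec n" shows "w = 0\<^sub>v n"
proof (rule eq_vecI)
  fix i assume "i < dim_vec (0\<^sub>v n :: real vec)"
  then have "(w $ i)^2 \<le> 0" using comp_le[of i w] assms by auto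
  then show "w $ i = 0\<^sub>v n $ i" using \<open>i < _\<close> by simp
qed (use assms in auto)

definition "isproj v p \<longleftrightarrow> N p \<and> orth (v - p)"

lemma proj_exists: assumes v: "v \<in> carrier_vec n" shows "\<exists>p. isproj v p"
proof -
  define x where "x t = ((\<lambda>u. G 0 *\<^sub>v u) ^^ t) v" for t
  have x0: "x 0 \<in> carrier_vec n" using v unfolding x_def by simp
  have xs: "\<forall>t. x (Suc t) = G 0 *\<^sub>v x t" unfolding x_def by simp
  have xc: "x t \<in> carrier_vec n" for t by (induction t) (use x0 xs in auto)
  obtain L r where r: "strict_mono r" and NL: "N L" and lim: "\<forall>i<n. (\<lambda>t. x (r t) $ i) \<longlonglongrightarrow> L $ i"
    using core[OF x0 xs] by blast
  have L: "L \<in> carrier_vec n" using NL unfolding N_def by auto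
  have o: "orth (v - x t)" for t
  proof (induction t)
    case 0 then show ?case using v unfolding x_def orth_def by (simp, intro conjI allI impI, auto simp: N_def)
  next
    case (Suc t)
    have "v - x (Suc t) = (v - x t) + (x t - G 0 *\<^sub>v x t)" using xs v xc[of t] by (intro eq_vecI) auto
    then show ?case using orth_add[OF Suc G_diff_orth[OF xc[of t], of 0]] by simp
  qed
  have lim2: "\<forall>i<n. (\<lambda>t. (v - x (r t)) $ i) \<longlonglongrightarrow> (v - L) $ i"
  proof (intro allI impI)
    fix i assume i: "i < n"
    have "(\<lambda>t. v $ i - x (r t) $ i) \<longlonglongrightarrow> v $ i - L $ i" using lim i by (intro tendsto_diff) auto
    moreover have "dim_vec (x t) = n" for t using xc[of t] by auto
    ultimately show "(\<lambda>t. (v - x (r t)) $ i) \<longlonglongrightarrow> (v - L) $ i" using i L by simp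
  qed
  have "orth (v - L)"
    using orth_lim[of "\<lambda>t. v - x t" "v - L" r] o v L lim2 by auto
  then show ?thesis using NL unfolding isproj_def by blast
qed

lemma proj_unique: assumes "isproj v p" "isproj v p'" and v: "v \<in> carrier_vec n" shows "p = p'"
proof -
  have p: "p \<in> carrier_vec n" "p' \<in> carrier_vec n" "A *\<^sub>v p = 0\<^sub>v m" "A *\<^sub>v p' = 0\<^sub>v m"
    using assms unfolding isproj_def N_def by auto
  have Nd: "N (p - p')" unfolding N_def using p A by (auto simp: mult_minus_distrib_mat_vec[of A m n])
  have "p - p' = (v - p') - (v - p)" using p v by (intro eq_vecI) auto
  moreover have "orth ((v - p') - (v - p))" using orth_minus assms unfolding isproj_def by simp
  ultimately have "orth (p - p')" by simp
  then have "sqnorm (p - p') = 0" using Nd unfolding orth_def sqnorm_def by auto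
  then have "p - p' = 0\<^sub>v n" using sqnorm_zero p by auto
  note z = this
  show ?thesis
  proof (rule eq_vecI)
    fix i assume i: "i < dim_vec p'"
    have "(p - p') $ i = 0" using z i p by simp
    then show "p $ i = p' $ i" using i by simp
  qed (use p in auto)
qed

lemma proj_null_isproj: assumes v: "v \<in> carrier_vec n" shows "isproj v (proj_null A v)"
proof -
  have eq: "(p \<in> carrier_vec (dim_col A) \<and> A *\<^sub>v p = 0\<^sub>v (dim_row A) \<and>
     (\<forall>z \<in> carrier_vec (dim_col A). A *\<^sub>v z = 0\<^sub>v (dim_row A) \<longrightarrow> (v - p) \<bullet> z = 0)) = isproj v p" for p
    using v unfolding isproj_def N_def orth_def by auto
  obtain p where "isproj v p" using proj_exists[OF v] by auto
  then have "\<exists>!p. isproj v p" using proj_unique[OF _ _ v] by (intro ex1I[of _ p]) auto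
  then show ?thesis unfolding proj_null_def eq by (rule theI')
qed

end


lemma sqnorm_add: assumes u: "u \<in> carrier_vec k" and w: "w \<in> carrier_vec k"
  shows "sqnorm (u + w) = sqnorm u + 2 * (u \<bullet> w) + sqnorm (w :: real vec)"
proof -
  have "(\<Sum>i<k. (u $ i + w $ i) * (u $ i + w $ i))
      = (\<Sum>i<k. u $ i * u $ i) + 2 * (\<Sum>i<k. u $ i * w $ i) + (\<Sum>i<k. w $ i * w $ i)"
    by (simp add: algebra_simps sum.distrib sum_distrib_left)
  then show ?thesis using u w unfolding sqnorm_def sp_sum0 by simp
qed

lemma sqnorm_zero_gen: assumes "sqnorm (w :: real vec) = 0" shows "w = 0\<^sub>v (dim_vec w)"
proof (rule eq_vecI)
  fix i assume "i < dim_vec (0\<^sub>v (dim_vec w) :: real vec)"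
  then have "(w $ i)^2 \<le> 0" using comp_le[of i w] assms by auto
  then show "w $ i = 0\<^sub>v (dim_vec w) $ i" using \<open>i < _\<close> by simp
qed simp

lemma diff_zero_eq: assumes "u \<in> carrier_vec k" "w \<in> carrier_vec k" "u - w = 0\<^sub>v k"
  shows "u = (w :: real vec)"
proof (rule eq_vecI)
  fix i assume i: "i < dim_vec w"
  have "(u - w) $ i = 0" using assms i by simp
  then show "u $ i = w $ i" using i by simp
qed (use assms in auto)

lemma eq_diff_zero: assumes "w \<in> carrier_vec k" shows "w - w = (0\<^sub>v k :: real vec)"
  using assms by (intro eq_vecI) auto

context kacz begin

lemma main_conv:
  assumes x0: "x 0 \<in> carrier_vec n" and xs: "\<forall>t. x (Suc t) = G 0 *\<^sub>v x t"
  shows "\<forall>i<n. (\<lambda>t. x t $ i) \<longlonglongrightarrow> proj_null A (x 0) $ i"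
proof (intro allI impI)
  fix i assume i: "i < n"
  define p where "p = proj_null A (x 0)"
  have pp: "isproj (x 0) p" unfolding p_def by (rule proj_null_isproj[OF x0])
  have pc: "p \<in> carrier_vec n" and Np: "N p" using pp unfolding isproj_def N_def by auto
  have xc: "x t \<in> carrier_vec n" for t by (induction t) (use x0 xs in auto)
  define w where "w t = x t - p" for t
  have w0: "w 0 \<in> carrier_vec n" unfolding w_def using pc x0 by simp
  have ws: "\<forall>t. w (Suc t) = G 0 *\<^sub>v w t"
  proof
    fix t
    have "G 0 *\<^sub>v w t = G 0 *\<^sub>v x t - G 0 *\<^sub>v p"
      unfolding w_def by (rule mult_minus_distrib_mat_vec[OF G_carrier xc pc])
    then show "w (Suc t) = G 0 *\<^sub>v w t" unfolding w_def using xs G_N[OF Np] by simp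
  qed
  have wo: "orth (w t)" for t
  proof (induction t)
    case 0 then show ?case using pp unfolding isproj_def w_def by simp
  next
    case (Suc t) then show ?case using ws G_orth by simp
  qed
  obtain L r where r: "strict_mono r" and NL: "N L" and lim: "\<forall>i<n. (\<lambda>t. w (r t) $ i) \<longlonglongrightarrow> L $ i"
    and sq: "(\<lambda>t. sqnorm (w t)) \<longlonglongrightarrow> sqnorm L"
    using core[OF w0 ws] by blast
  have L: "L \<in> carrier_vec n" using NL unfolding N_def by auto
  have "orth L" using orth_lim[of w L r] wo L lim by auto
  then have "sqnorm L = 0" using NL unfolding orth_def sqnorm_def by auto
  then have sq0: "(\<lambda>t. sqrt (sqnorm (w t))) \<longlonglongrightarrow> 0" using tendsto_real_sqrt[OF sq] by simp
  have wc: "w t \<in> carrier_vec n" for t unfolding w_def using pc xc[of t] by simp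
  have bd: "\<bar>w t $ i\<bar> \<le> sqrt (sqnorm (w t))" for t
  proof -
    have "(w t $ i)^2 \<le> sqnorm (w t)" using comp_le[of i "w t"] wc[of t] i by auto
    then have "sqrt ((w t $ i)^2) \<le> sqrt (sqnorm (w t))" by (rule real_sqrt_le_mono)
    then show ?thesis by simp
  qed
  have "(\<lambda>t. w t $ i) \<longlonglongrightarrow> 0"
  proof (rule real_tendsto_sandwich[where f = "\<lambda>t. - sqrt (sqnorm (w t))" and h = "\<lambda>t. sqrt (sqnorm (w t))"])
    show "\<forall>\<^sub>F t in sequentially. - sqrt (sqnorm (w t)) \<le> w t $ i" (is "\<forall>\<^sub>F t in _. ?P t")
    proof (intro always_eventually allI)
      fix t show "?P t" using bd[of t] unfolding abs_le_iff by linarith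
    qed
    show "\<forall>\<^sub>F t in sequentially. w t $ i \<le> sqrt (sqnorm (w t))" (is "\<forall>\<^sub>F t in _. ?P t")
    proof (intro always_eventually allI)
      fix t show "?P t" using bd[of t] unfolding abs_le_iff by linarith
    qed
    show "(\<lambda>t. - sqrt (sqnorm (w t))) \<longlonglongrightarrow> 0" using tendsto_minus[OF sq0] by simp
  qed (rule sq0)
  then have "(\<lambda>t. w t $ i + p $ i) \<longlonglongrightarrow> 0 + p $ i" by (intro tendsto_add) auto
  moreover have "w t $ i + p $ i = x t $ i" for t unfolding w_def using xc[of t] pc i by simp
  ultimately show "(\<lambda>t. x t $ i) \<longlonglongrightarrow> proj_null A (x 0) $ i" unfolding p_def by simp
qed

lemma mnls_eq: assumes xs: "xs \<in> carrier_vec n" and b: "A *\<^sub>v xs = b"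
  shows "mnls A b = xs - proj_null A xs"
proof -
  have bc: "b \<in> carrier_vec m" using b mult_mat_vec_carrier[OF A xs] by simp
  have ls: "is_ls_sol A b z \<longleftrightarrow> z \<in> carrier_vec n \<and> A *\<^sub>v z = b" for z
  proof
    assume h: "is_ls_sol A b z"
    then have z: "z \<in> carrier_vec n" unfolding is_ls_sol_def by auto
    have "sqnorm (A *\<^sub>v z - b) \<le> sqnorm (A *\<^sub>v xs - b)" using h xs unfolding is_ls_sol_def by auto
    also have "A *\<^sub>v xs - b = 0\<^sub>v m" using b bc by (intro eq_vecI) auto
    finally have "sqnorm (A *\<^sub>v z - b) \<le> 0" unfolding sqnorm_def by simp
    then have "sqnorm (A *\<^sub>v z - b) = 0" using sqnorm_nonneg[of "A *\<^sub>v z - b"] by linarith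
    then have "A *\<^sub>v z - b = 0\<^sub>v (dim_vec (A *\<^sub>v z - b))" by (rule sqnorm_zero_gen)
    then have e: "A *\<^sub>v z - b = 0\<^sub>v m" using bc by simp
    have "A *\<^sub>v z = b" by (rule diff_zero_eq[OF mult_mat_vec_carrier[OF A z] bc e])
    then show "z \<in> carrier_vec n \<and> A *\<^sub>v z = b" using z by auto
  next
    assume h: "z \<in> carrier_vec n \<and> A *\<^sub>v z = b"
    have "A *\<^sub>v z - b = 0\<^sub>v m" using h eq_diff_zero[OF bc] by simp
    then have "sqnorm (A *\<^sub>v z - b) = 0" unfolding sqnorm_def by simp
    then show "is_ls_sol A b z" unfolding is_ls_sol_def using h
      by (simp add: sqnorm_nonneg)
  qed
  define q where "q = proj_null A xs"
  have pq: "isproj xs q" unfolding q_def by (rule proj_null_isproj[OF xs])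
  have qc: "q \<in> carrier_vec n" and Aq: "A *\<^sub>v q = 0\<^sub>v m" and oq: "orth (xs - q)"
    using pq unfolding isproj_def N_def by auto
  define xd where "xd = xs - q"
  have xdc: "xd \<in> carrier_vec n" unfolding xd_def using qc xs by simp
  have Axd: "A *\<^sub>v xd = b"
  proof -
    have "A *\<^sub>v xd = A *\<^sub>v xs - A *\<^sub>v q" unfolding xd_def by (rule mult_minus_distrib_mat_vec[OF A xs qc])
    also have "\<dots> = b - 0\<^sub>v m" using b Aq by simp
    also have "\<dots> = b" using bc by (intro eq_vecI) auto
    finally show ?thesis .
  qed
  have decomp: "sqnorm z = sqnorm xd + sqnorm (z - xd)" if z: "z \<in> carrier_vec n" "A *\<^sub>v z = b" for z
  proof -
    have dc: "z - xd \<in> carrier_vec n" using xdc z by simp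
    have "A *\<^sub>v (z - xd) = A *\<^sub>v z - A *\<^sub>v xd" by (rule mult_minus_distrib_mat_vec[OF A z(1) xdc])
    also have "\<dots> = 0\<^sub>v m" using z(2) Axd eq_diff_zero[OF bc] by simp
    finally have "N (z - xd)" unfolding N_def using dc by simp
    then have o: "xd \<bullet> (z - xd) = 0" using oq unfolding orth_def xd_def by auto
    have "z = xd + (z - xd)" using z xdc by (intro eq_vecI) auto
    then have "sqnorm z = sqnorm (xd + (z - xd))" by simp
    also have "\<dots> = sqnorm xd + 2 * (xd \<bullet> (z - xd)) + sqnorm (z - xd)" by (rule sqnorm_add[OF xdc dc])
    finally show ?thesis using o by simp
  qed
  have Pxd: "is_ls_sol A b xd \<and> (\<forall>z. is_ls_sol A b z \<longrightarrow> sqnorm xd \<le> sqnorm z)"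
  proof (intro conjI allI impI)
    show "is_ls_sol A b xd" using ls xdc Axd by simp
    fix z assume "is_ls_sol A b z"
    then have z: "z \<in> carrier_vec n" "A *\<^sub>v z = b" using ls by auto
    show "sqnorm xd \<le> sqnorm z" using decomp[OF z] sqnorm_nonneg[of "z - xd"] by linarith
  qed
  have uniq: "y = xd" if "is_ls_sol A b y \<and> (\<forall>z. is_ls_sol A b z \<longrightarrow> sqnorm y \<le> sqnorm z)" for y
  proof -
    have y: "y \<in> carrier_vec n" "A *\<^sub>v y = b" using that ls by auto
    have "sqnorm y \<le> sqnorm xd" using that Pxd by auto
    then have "sqnorm (y - xd) \<le> 0" using decomp[OF y] by linarith
    then have "sqnorm (y - xd) = 0" using sqnorm_nonneg[of "y - xd"] by linarith
    then have "y - xd = 0\<^sub>v (dim_vec (y - xd))" by (rule sqnorm_zero_gen)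
    then have e: "y - xd = 0\<^sub>v n" using xdc by simp
    show ?thesis by (rule diff_zero_eq[OF y(1) xdc e])
  qed
  have "mnls A b = xd" unfolding mnls_def
    by (rule the1_equality[OF ex1I[of "\<lambda>x. is_ls_sol A b x \<and> (\<forall>z. is_ls_sol A b z \<longrightarrow> sqnorm x \<le> sqnorm z)" xd, OF Pxd uniq] Pxd])
  then show ?thesis unfolding xd_def q_def .
qed

end


context kacz begin

lemma Qj_G: "Qj A mu j = G (Suc j)" unfolding Qj_def G_def P_def by simp

lemma iter_id: assumes C: "C \<in> carrier_mat m m" and CA: "AS A mu = C * A" and u: "u \<in> carrier_vec n"
  shows "(transpose_mat A * transpose_mat C * mat_diag m mu
                     * mat_diag m (\<lambda>i. 1 / sqnorm (row A i))) *\<^sub>v (A *\<^sub>v u) = u - G 0 *\<^sub>v u"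
proof -
  define f where "f = (\<lambda>i. 1 / sqnorm (row A i))"
  have X: "transpose_mat A * transpose_mat C = transpose_mat (AS A mu)"
    using transpose_mult[OF C A] CA by simp
  have Xc: "transpose_mat (AS A mu) \<in> carrier_mat n m" by (simp add: AS_def)
  have M1: "transpose_mat (AS A mu) * mat_diag m mu = mat n m (\<lambda>(i,j). transpose_mat (AS A mu) $$ (i,j) * mu j)"
    by (rule mat_diag_mult_right[OF Xc])
  have M2: "mat n m (\<lambda>(i,j). transpose_mat (AS A mu) $$ (i,j) * mu j) * mat_diag m f
     = mat n m (\<lambda>(i,j). mat n m (\<lambda>(i,j). transpose_mat (AS A mu) $$ (i,j) * mu j) $$ (i,j) * f j)"
    by (rule mat_diag_mult_right) simp
  have M: "transpose_mat A * transpose_mat C * mat_diag m mu * mat_diag m f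
     = mat n m (\<lambda>(i,j). (G (Suc j) *\<^sub>v row A j) $ i * mu j * f j)"
    unfolding X M1 M2 by (rule eq_matI) (auto simp: AS_def Qj_G)
  show ?thesis
  proof (rule eq_vecI)
    fix i assume "i < dim_vec (u - G 0 *\<^sub>v u)"
    then have i: "i < n" using u by simp
    have "((transpose_mat A * transpose_mat C * mat_diag m mu * mat_diag m f) *\<^sub>v (A *\<^sub>v u)) $ i
       = (\<Sum>j<m. (G (Suc j) *\<^sub>v row A j) $ i * mu j * f j * (row A j \<bullet> u))"
      unfolding M using i by (simp add: sp_sum0)
    also have "\<dots> = (\<Sum>k\<in>{0..<m}. c k * (row A k \<bullet> u) * (G (Suc k) *\<^sub>v row A k) $ i)"
      unfolding atLeast0LessThan c_def f_def by (intro sum.cong) auto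
    also have "\<dots> = (u - G 0 *\<^sub>v u) $ i" using G_tele[OF u i, of 0] i u by simp
    finally show "((transpose_mat A * transpose_mat C * mat_diag m mu
                     * mat_diag m (\<lambda>i. 1 / sqnorm (row A i))) *\<^sub>v (A *\<^sub>v u)) $ i = (u - G 0 *\<^sub>v u) $ i"
      unfolding f_def .
  qed (use u in simp)
qed

lemma final:
  fixes b y0 :: "real vec" and C :: "real mat" and y :: "nat \<Rightarrow> real vec"
  assumes b: "b \<in> carrier_vec m"
    and consistent: "\<exists>x \<in> carrier_vec n. A *\<^sub>v x = b"
    and C: "unit_upper_triangular m C"
    and CA: "AS A mu = C * A"
    and y0: "y0 \<in> carrier_vec n"
    and y_0: "y 0 = y0"
    and y_step: "\<forall>k. y (Suc k) = y k + (transpose_mat A * transpose_mat C * mat_diag m mu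
                     * mat_diag m (\<lambda>i. 1 / sqnorm (row A i))) *\<^sub>v (b - A *\<^sub>v y k)"
  shows "\<forall>i<n. (\<lambda>k. y k $ i) \<longlonglongrightarrow> (mnls A b + proj_null A y0) $ i"
proof -
  obtain xs where xs: "xs \<in> carrier_vec n" and Axs: "A *\<^sub>v xs = b" using consistent by auto
  have Cc: "C \<in> carrier_mat m m" using C unfolding unit_upper_triangular_def by auto
  define M where "M = transpose_mat A * transpose_mat C * mat_diag m mu
                     * mat_diag m (\<lambda>i. 1 / sqnorm (row A i))"
  have M1: "transpose_mat A * transpose_mat C \<in> carrier_mat n m"
    by (rule mult_carrier_mat[of _ n m _ m]) (use A Cc in auto)
  have M2: "transpose_mat A * transpose_mat C * mat_diag m mu \<in> carrier_mat n m"
    by (rule mult_carrier_mat[OF M1]) simp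
  have Mc: "M \<in> carrier_mat n m" unfolding M_def
    by (rule mult_carrier_mat[OF M2]) simp
  have ys: "y (Suc k) = y k + M *\<^sub>v (b - A *\<^sub>v y k)" for k
    unfolding M_def by (rule y_step[rule_format, of k])
  have yc: "y t \<in> carrier_vec n" for t
  proof (induction t)
    case 0 then show ?case using y0 y_0 by simp
  next
    case (Suc t)
    have "b - A *\<^sub>v y t \<in> carrier_vec m" using b mult_mat_vec_carrier[OF A Suc] by simp
    then have "M *\<^sub>v (b - A *\<^sub>v y t) \<in> carrier_vec n" by (rule mult_mat_vec_carrier[OF Mc])
    then show ?case unfolding ys using Suc by simp
  qed
  define e where "e t = y t - xs" for t
  have e0: "e 0 \<in> carrier_vec n" unfolding e_def using yc xs by simp
  have es: "\<forall>t. e (Suc t) = G 0 *\<^sub>v e t"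
  proof
    fix t
    have d: "xs - y t \<in> carrier_vec n" using xs yc[of t] by simp
    have bA: "b - A *\<^sub>v y t = A *\<^sub>v (xs - y t)"
      unfolding Axs[symmetric] by (rule mult_minus_distrib_mat_vec[OF A xs yc, symmetric])
    have "M *\<^sub>v (b - A *\<^sub>v y t) = M *\<^sub>v (A *\<^sub>v (xs - y t))" unfolding bA ..
    also have "\<dots> = (xs - y t) - G 0 *\<^sub>v (xs - y t)" unfolding M_def by (rule iter_id[OF Cc CA d])
    finally have y1: "y (Suc t) = y t + ((xs - y t) - G 0 *\<^sub>v (xs - y t))"
      unfolding ys by simp
    have g1: "G 0 *\<^sub>v (xs - y t) = G 0 *\<^sub>v xs - G 0 *\<^sub>v y t" by (rule mult_minus_distrib_mat_vec[OF G_carrier xs yc])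
    have g2: "G 0 *\<^sub>v (y t - xs) = G 0 *\<^sub>v y t - G 0 *\<^sub>v xs" by (rule mult_minus_distrib_mat_vec[OF G_carrier yc xs])
    show "e (Suc t) = G 0 *\<^sub>v e t"
      unfolding e_def y1 g2 g1
    proof (rule eq_vecI)
      have dd: "dim_vec (y t) = n" "dim_vec xs = n" using yc[of t] xs by auto
      fix i assume "i < dim_vec (G 0 *\<^sub>v y t - G 0 *\<^sub>v xs)"
      then have i: "i < n" by simp
      show "(y t + (xs - y t - (G 0 *\<^sub>v xs - G 0 *\<^sub>v y t)) - xs) $ i = (G 0 *\<^sub>v y t - G 0 *\<^sub>v xs) $ i"
        using i dd by simp
    qed (use xs in simp)
  qed
  have lim: "\<forall>i<n. (\<lambda>t. e t $ i) \<longlonglongrightarrow> proj_null A (e 0) $ i" by (rule main_conv[OF e0 es])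
  define py where "py = proj_null A y0"
  define px where "px = proj_null A xs"
  have ipy: "isproj y0 py" unfolding py_def by (rule proj_null_isproj[OF y0])
  have ipx: "isproj xs px" unfolding px_def by (rule proj_null_isproj[OF xs])
  have pyc: "py \<in> carrier_vec n" "A *\<^sub>v py = 0\<^sub>v m" using ipy unfolding isproj_def N_def by auto
  have pxc: "px \<in> carrier_vec n" "A *\<^sub>v px = 0\<^sub>v m" using ipx unfolding isproj_def N_def by auto
  have "isproj (y0 - xs) (py - px)"
    unfolding isproj_def
  proof
    have "A *\<^sub>v (py - px) = A *\<^sub>v py - A *\<^sub>v px" by (rule mult_minus_distrib_mat_vec[OF A pyc(1) pxc(1)])
    also have "\<dots> = 0\<^sub>v m" using pyc pxc by (intro eq_vecI) auto
    finally show "N (py - px)" unfolding N_def using pyc pxc by simp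
    have "(y0 - xs) - (py - px) = (y0 - py) - (xs - px)" using y0 xs pyc pxc by (intro eq_vecI) auto
    moreover have "orth ((y0 - py) - (xs - px))"
      using ipy ipx unfolding isproj_def by (rule_tac orth_minus) auto
    ultimately show "orth ((y0 - xs) - (py - px))" by simp
  qed
  moreover have "isproj (y0 - xs) (proj_null A (y0 - xs))" using y0 xs by (intro proj_null_isproj) simp
  moreover have "y0 - xs \<in> carrier_vec n" using y0 xs by simp
  ultimately have "proj_null A (y0 - xs) = py - px"
    by (intro proj_unique)
  then have pe: "proj_null A (e 0) = py - px"
    unfolding e_def y_0 .
  have mn: "mnls A b = xs - px" unfolding px_def by (rule mnls_eq[OF xs Axs])
  show ?thesis
  proof (intro allI impI)
    fix i assume i: "i < n"
    have "(\<lambda>t. e t $ i + xs $ i) \<longlonglongrightarrow> proj_null A (e 0) $ i + xs $ i"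
      using lim i by (intro tendsto_add) auto
    moreover have "e t $ i + xs $ i = y t $ i" for t unfolding e_def using yc[of t] xs i by simp
    moreover have "proj_null A (e 0) $ i + xs $ i = (mnls A b + proj_null A y0) $ i"
      unfolding pe mn py_def[symmetric] using i pyc pxc xs by simp
    ultimately show "(\<lambda>t. y t $ i) \<longlonglongrightarrow> (mnls A b + proj_null A y0) $ i" by simp
  qed
qed

end

theorem theorem3p12:
  fixes A :: "real mat" and b y0 :: "real vec" and mu :: "nat \<Rightarrow> real"
    and C :: "real mat" and y :: "nat \<Rightarrow> real vec" and m n :: nat
  assumes A: "A \<in> carrier_mat m n"
    and nozero: "\<forall>i<m. row A i \<noteq> 0\<^sub>v n"
    and b: "b \<in> carrier_vec m"
    and consistent: "\<exists>x \<in> carrier_vec n. A *\<^sub>v x = b"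
    and mu: "\<forall>i<m. 0 < mu i \<and> mu i < 2"
    and C: "unit_upper_triangular m C"
    and CA: "AS A mu = C * A"
    and y0: "y0 \<in> carrier_vec n"
    and y_0: "y 0 = y0"
    and y_step: "\<forall>k. y (Suc k) = y k + (transpose_mat A * transpose_mat C * mat_diag m mu
                     * mat_diag m (\<lambda>i. 1 / sqnorm (row A i))) *\<^sub>v (b - A *\<^sub>v y k)"
  shows "\<forall>i<n. (\<lambda>k. y k $ i) \<longlonglongrightarrow> (mnls A b + proj_null A y0) $ i"
proof -
  interpret K: kacz A m n mu using A nozero mu by unfold_locales
  show ?thesis by (rule K.final[OF b consistent C CA y0 y_0 y_step])
qed


end
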